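(* Let $K\geq 1$ be an integer and let $A$ be a real $m\times n$ matrix (with $K+1\leq n$) whose restricted isometry constant of order $K+1$ satisfies $\delta_{K+1}=\frac{1}{\sqrt{K}+1}$. Then the OMP algorithm perfectly recovers every $K$-sparse signal $x\in\mathbb{R}^n$ from $y=Ax$ in $K$ iterations.
   Context: A vector $x\in\mathbb{R}^n$ is $k$-sparse if $|\mathrm{supp}(x)|\leq k$, where $\mathrm{supp}(x)=\{i: x_i\neq 0\}$. For an $m\times n$ real matrix $A$ and an integer $1\leq k\leq n$, the restricted isometry constant $\delta_k$ is the smallest constant such that $(1-\delta_k)\|x\|_2^2\leq\|Ax\|_2^2\leq(1+\delta_k)\|x\|_2^2$ for all $k$-sparse $x\in\mathbb{R}^n$. For $T\subseteq\{1,\dots,n\}$, $A_T$ denotes the submatrix of $A$ consisting of the columns indexed by $T$, and $A_j$ denotes the $j$-th column of $A$. The OMP (orthogonal matching pursuit) algorithm with input $y$, $A$ and sparsity $K$: set $k=0$, $r^0=y$, $T^0=\emptyset$; while $k<K$: $k\leftarrow k+1$; $t^k=\arg\max_j|\langle r^{k-1},A_j\rangle|$; $T^k=T^{k-1}\cup\{t^k\}$; $\hat x_{T^k}=\arg\min_{z}\|y-A_{T^k}z\|_2$; $r^k=y-A_{T^k}\hat x_{T^k}$. Output $\hat x=\arg\min_{z:\,\mathrm{supp}(z)=T^K}\|y-Az\|_2$. Perfect recovery in $K$ iterations means that in each of the $K$ iterations OMP selects an index of $\mathrm{supp}(x)$ and the output satisfies $\hat x=x$. *)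

theory Defs
  imports "HOL-Analysis.Analysis"
begin

text \<open>Signals are vectors in R^n (index type 'n), matrices are real^'n^'m (m rows, n columns).\<close>

definition supp :: "real^'n \<Rightarrow> 'n set" where
  "supp x = {i. x $ i \<noteq> 0}"

definition sparse :: "nat \<Rightarrow> real^'n \<Rightarrow> bool" where
  "sparse k x \<longleftrightarrow> card (supp x) \<le> k"

definition RIC :: "real^'n^'m \<Rightarrow> nat \<Rightarrow> real" where
  "RIC A k = Inf {\<delta>. \<forall>x. sparse k x \<longrightarrow>
      (1 - \<delta>) * (norm x)\<^sup>2 \<le> (norm (A *v x))\<^sup>2 \<and>
      (norm (A *v x))\<^sup>2 \<le> (1 + \<delta>) * (norm x)\<^sup>2}"

definition ls_min :: "real^'n^'m \<Rightarrow> real^'m \<Rightarrow> 'n set \<Rightarrow> real^'n \<Rightarrow> bool" where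
  "ls_min A y T z \<longleftrightarrow> supp z \<subseteq> T \<and>
     (\<forall>w. supp w \<subseteq> T \<longrightarrow> norm (y - A *v z) \<le> norm (y - A *v w))"

text \<open>OMP residual after selecting the index set T (independent of the chosen minimizer).\<close>
definition omp_residual :: "real^'n^'m \<Rightarrow> real^'m \<Rightarrow> 'n set \<Rightarrow> real^'m" where
  "omp_residual A y T = y - A *v (SOME z. ls_min A y T z)"

text \<open>t is a valid run of OMP with K iterations: t k is the index selected in iteration k
  (k = 1..K), any maximizer of the correlation with the current residual (arbitrary tie-breaking).\<close>
definition omp_run :: "real^'n^'m \<Rightarrow> real^'m \<Rightarrow> nat \<Rightarrow> (nat \<Rightarrow> 'n) \<Rightarrow> bool" where
  "omp_run A y K t \<longleftrightarrow> (\<forall>k \<in> {1..K}. \<forall>j.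
      \<bar>omp_residual A y (t ` {1..<k}) \<bullet> column j A\<bar>
        \<le> \<bar>omp_residual A y (t ` {1..<k}) \<bullet> column (t k) A\<bar>)"

end

theory Submission
  imports Defs
begin

lemma supp_add: "supp (a + b) \<subseteq> supp a \<union> supp b"
  unfolding supp_def by auto
lemma supp_diff: "supp (a - b) \<subseteq> supp a \<union> supp b"
  unfolding supp_def by auto
lemma supp_scale: "supp (c *\<^sub>R a) \<subseteq> supp a"
  unfolding supp_def by auto
lemma supp_axis: "supp (axis j (1::real)) = {j}"
  unfolding supp_def by (auto simp: axis_def)

lemma norm_sq_expand:
  fixes a b :: "'a::real_inner"
  shows "(norm (a + t *\<^sub>R b))\<^sup>2 = (norm a)\<^sup>2 + 2 * t * (a \<bullet> b) + t\<^sup>2 * (norm b)\<^sup>2"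
  unfolding power2_norm_eq_inner by (simp add: inner_add_left inner_add_right inner_commute algebra_simps power2_eq_square)

lemma Av_expand:
  fixes A :: "real^'n^'m"
  shows "A *v (u + t *\<^sub>R axis i 1) = A *v u + t *\<^sub>R column i A"
  by (simp add: matrix_vector_right_distrib matrix_vector_mult_scaleR matrix_vector_mult_basis)

lemma norm_axis_expand:
  fixes u :: "real^'n"
  assumes "u $ i = 0"
  shows "(norm (u + t *\<^sub>R axis i 1))\<^sup>2 = (norm u)\<^sup>2 + t\<^sup>2"
  using assms by (simp add: norm_sq_expand inner_axis)

lemma normsq_sum:
  fixes A :: "real^'n^'m"
  shows "(norm (A *v u))\<^sup>2 = (\<Sum>j\<in>UNIV. u $ j * ((A *v u) \<bullet> column j A))"
proof -
  have "(norm (A *v u))\<^sup>2 = (A *v u) \<bullet> (A *v u)" by (simp add: power2_norm_eq_inner)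
  also have "\<dots> = (A *v u) \<bullet> (\<Sum>j\<in>UNIV. u $ j *\<^sub>R column j A)"
    by (subst (2) matrix_mult_sum) (simp add: scalar_mult_eq_scaleR)
  also have "\<dots> = (\<Sum>j\<in>UNIV. u $ j * ((A *v u) \<bullet> column j A))"
    by (simp add: inner_sum_right)
  finally show ?thesis .
qed

definition RIP :: "real^'n^'m \<Rightarrow> nat \<Rightarrow> real \<Rightarrow> bool" where
  "RIP A k \<delta> \<longleftrightarrow> (\<forall>v. card (supp v) \<le> k \<longrightarrow>
     (1 - \<delta>) * (norm v)\<^sup>2 \<le> (norm (A *v v))\<^sup>2 \<and> (norm (A *v v))\<^sup>2 \<le> (1 + \<delta>) * (norm v)\<^sup>2)"

lemma sum_bound:
  fixes A :: "real^'n^'m"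
  assumes su: "supp u \<subseteq> S" and cS: "card S \<le> K"
    and mx: "\<forall>j\<in>S. \<bar>(A *v u) \<bullet> column j A\<bar> \<le> P" and P0: "P \<ge> 0"
  shows "(norm (A *v u))\<^sup>2 \<le> P * sqrt (real K) * norm u"
proof -
  have "(norm (A *v u))\<^sup>2 = (\<Sum>j\<in>UNIV. u $ j * ((A *v u) \<bullet> column j A))" by (rule normsq_sum)
  also have "\<dots> = (\<Sum>j\<in>S. u $ j * ((A *v u) \<bullet> column j A))"
    using su by (intro sum.mono_neutral_right) (auto simp: supp_def)
  also have "\<dots> \<le> (\<Sum>j\<in>S. \<bar>u $ j\<bar> * P)"
  proof (intro sum_mono)
    fix j assume "j \<in> S"
    then have "\<bar>(A *v u) \<bullet> column j A\<bar> \<le> P" using mx by auto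
    then show "u $ j * ((A *v u) \<bullet> column j A) \<le> \<bar>u $ j\<bar> * P"
    proof -
      have "u $ j * ((A *v u) \<bullet> column j A) \<le> \<bar>u $ j\<bar> * \<bar>(A *v u) \<bullet> column j A\<bar>"
        by (metis abs_ge_self abs_mult)
      also have "\<dots> \<le> \<bar>u $ j\<bar> * P" by (rule mult_left_mono) (use \<open>\<bar>(A *v u) \<bullet> column j A\<bar> \<le> P\<close> in auto)
      finally show ?thesis .
    qed
  qed
  also have "\<dots> = P * (\<Sum>j\<in>S. \<bar>u $ j\<bar> * \<bar>1::real\<bar>)" by (simp add: sum_distrib_left mult.commute)
  also have "\<dots> \<le> P * (L2_set (\<lambda>j. u $ j) S * L2_set (\<lambda>j. 1::real) S)"
    using P0 L2_set_mult_ineq[of "\<lambda>j. u $ j" "\<lambda>j. 1::real" S] by (auto intro: mult_left_mono)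
  also have "L2_set (\<lambda>j. 1::real) S = sqrt (card S)" by (simp add: L2_set_def)
  also have "L2_set (\<lambda>j. u $ j) S = norm u"
  proof -
    have "(\<Sum>j\<in>S. (u $ j)\<^sup>2) = (\<Sum>j\<in>UNIV. (u $ j)\<^sup>2)"
      using su by (intro sum.mono_neutral_left) (auto simp: supp_def)
    then show ?thesis by (simp add: L2_set_def norm_vec_def)
  qed
  also have "P * (norm u * sqrt (real (card S))) \<le> P * sqrt (real K) * norm u"
  proof -
    have "sqrt (real (card S)) \<le> sqrt (real K)" using cS by simp
    then have "norm u * sqrt (real (card S)) \<le> norm u * sqrt (real K)" by (simp add: mult_left_mono)
    then show ?thesis using P0 by (simp add: mult_left_mono mult.commute mult.left_commute)
  qed
  finally show ?thesis .
qed

lemma core: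
  fixes A :: "real^'n^'m"
  assumes rip: "RIP A (K+1) \<delta>" and dK: "\<delta> * (sqrt (real K) + 1) = 1" and dpos: "\<delta> > 0"
    and su: "supp u \<subseteq> S" and cS: "card S \<le> K" and iS: "i \<notin> S"
    and mx: "\<forall>j\<in>S. \<bar>(A *v u) \<bullet> column j A\<bar> \<le> \<bar>(A *v u) \<bullet> column i A\<bar>"
  shows "A *v u = 0"
proof (cases "u = 0")
  case True then show ?thesis by simp
next
  case False
  define p where "p = (A *v u) \<bullet> column i A"
  define N where "N = norm u"
  define a where "a = (norm (A *v u))\<^sup>2"
  define c where "c = (norm (column i A))\<^sup>2"
  have Npos: "N > 0" using False by (simp add: N_def)
  have ui: "u $ i = 0" using su iS unfolding supp_def by auto
  have cardv: "card (supp (u + t *\<^sub>R axis i 1)) \<le> K+1" for t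
  proof -
    have "supp (u + t *\<^sub>R axis i 1) \<subseteq> insert i S"
      using supp_add[of u "t *\<^sub>R axis i 1"] supp_scale[of t "axis i 1"] supp_axis[of i] su by blast
    then have "card (supp (u + t *\<^sub>R axis i 1)) \<le> card (insert i S)" by (simp add: card_mono)
    also have "\<dots> \<le> K + 1" using cS by (simp add: card_insert_if)
    finally show ?thesis .
  qed
  have ineq: "(1-\<delta>)*(N\<^sup>2+t\<^sup>2) \<le> a + 2*t*p + t\<^sup>2*c \<and> a + 2*t*p + t\<^sup>2*c \<le> (1+\<delta>)*(N\<^sup>2+t\<^sup>2)" for t
  proof -
    have "(norm (A *v (u + t *\<^sub>R axis i 1)))\<^sup>2 = a + 2*t*p + t\<^sup>2*c"
      unfolding Av_expand norm_sq_expand a_def p_def c_def ..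
    moreover have "(norm (u + t *\<^sub>R axis i 1))\<^sup>2 = N\<^sup>2 + t\<^sup>2"
      unfolding N_def by (rule norm_axis_expand[OF ui])
    ultimately show ?thesis using rip cardv[of t] unfolding RIP_def by metis
  qed
  have a_low: "(1-\<delta>)*N\<^sup>2 \<le> a" using ineq[of 0] by simp
  have c_up: "c \<le> 1 + \<delta>"
  proof -
    have "card (supp (axis i (1::real))) \<le> K + 1" by (simp add: supp_axis)
    then have "(norm (A *v axis i 1))\<^sup>2 \<le> (1+\<delta>) * (norm (axis i (1::real)))\<^sup>2"
      using rip unfolding RIP_def by blast
    then show ?thesis by (simp add: c_def matrix_vector_mult_basis)
  qed
  have pb: "\<bar>p\<bar> \<le> \<delta> * N"
  proof -
    have 1: "a + 2*N*p + N\<^sup>2*c \<le> (1+\<delta>)*(N\<^sup>2+N\<^sup>2)" using ineq[of N] by simp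
    have 2: "(1-\<delta>)*(N\<^sup>2+N\<^sup>2) \<le> a - 2*N*p + N\<^sup>2*c" using ineq[of "-N"] by simp
    have 3: "a - 2*N*p + N\<^sup>2*c \<le> (1+\<delta>)*(N\<^sup>2+N\<^sup>2)" using ineq[of "-N"] by simp
    have 4: "(1-\<delta>)*(N\<^sup>2+N\<^sup>2) \<le> a + 2*N*p + N\<^sup>2*c" using ineq[of N] by simp
    from 1 2 have "N * p \<le> N * (\<delta> * N)" by (simp add: power2_eq_square algebra_simps)
    then have "p \<le> \<delta> * N" using Npos by simp
    moreover from 3 4 have "N * (-p) \<le> N * (\<delta> * N)" by (simp add: power2_eq_square algebra_simps)
    then have "-p \<le> \<delta> * N" using Npos by (simp only: mult_le_cancel_left_pos)
    ultimately show ?thesis by simp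
  qed
  have a_up: "a \<le> \<bar>p\<bar> * sqrt (real K) * N"
    unfolding a_def N_def p_def by (rule sum_bound[OF su cS]) (use mx in auto)
  also have "\<dots> \<le> \<delta> * N * sqrt (real K) * N"
    using pb Npos by (simp add: mult_right_mono)
  also have "\<dots> = (\<delta> * sqrt (real K)) * N\<^sup>2" by (simp add: power2_eq_square algebra_simps)
  also have "\<delta> * sqrt (real K) = 1 - \<delta>" using dK by (simp add: algebra_simps)
  finally have a_eq: "a = (1-\<delta>)*N\<^sup>2" using a_low by simp
  have p0: "p = 0"
  proof (rule ccontr)
    assume pn: "p \<noteq> 0"
    define t where "t = \<bar>p\<bar> / (2*\<delta>)"
    have tpos: "t > 0" using pn dpos by (simp add: t_def)
    have e: "(1-\<delta>)*(N\<^sup>2+t\<^sup>2) = (1-\<delta>)*N\<^sup>2 + t\<^sup>2 - \<delta>*t\<^sup>2" by (simp add: algebra_simps)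
    have ct: "t\<^sup>2*c \<le> t\<^sup>2 + \<delta>*t\<^sup>2"
    proof -
      have "t\<^sup>2*c \<le> t\<^sup>2*(1+\<delta>)" by (rule mult_left_mono[OF c_up]) simp
      then show ?thesis by (simp add: algebra_simps)
    qed
    have i1: "(1-\<delta>)*(N\<^sup>2+t\<^sup>2) \<le> a - 2*t*p + t\<^sup>2*c" using ineq[of "-t"] by simp
    have i2: "(1-\<delta>)*(N\<^sup>2+t\<^sup>2) \<le> a + 2*t*p + t\<^sup>2*c" using ineq[of "t"] by simp
    have 1: "2*t*p \<le> \<delta> * t\<^sup>2 * 2" using i1 e ct a_eq by linarith
    have 2: "-(2*t*p) \<le> \<delta> * t\<^sup>2 * 2" using i2 e ct a_eq by linarith
    have "2*t*\<bar>p\<bar> \<le> \<delta> * t\<^sup>2 * 2" using 1 2 tpos by (cases "p \<ge> 0") auto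
    then have "\<bar>p\<bar> \<le> \<delta> * t" using tpos by (simp add: power2_eq_square algebra_simps)
    also have "\<dots> = \<bar>p\<bar> / 2" using dpos by (simp add: t_def)
    finally show False using pn by simp
  qed
  have "a \<le> 0" using a_up p0 by simp
  then show ?thesis by (simp add: a_def)
qed

lemma RIP_RIC:
  fixes A :: "real^'n^'m"
  shows "RIP A k (RIC A k)"
proof -
  define D where "D = {\<delta>. \<forall>x. sparse k x \<longrightarrow>
      (1 - \<delta>) * (norm x)\<^sup>2 \<le> (norm (A *v x))\<^sup>2 \<and>
      (norm (A *v x))\<^sup>2 \<le> (1 + \<delta>) * (norm x)\<^sup>2}"
  have R: "RIC A k = Inf D" unfolding RIC_def D_def ..
  obtain B where B: "\<And>x. norm (A *v x) \<le> norm x * B" and "B > 0"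
    using bounded_linear.pos_bounded[OF matrix_vector_mul_bounded_linear[of A]] by blast
  have "B\<^sup>2 + 1 \<in> D"
  proof -
    have "(1 - (B\<^sup>2 + 1)) * (norm x)\<^sup>2 \<le> (norm (A *v x))\<^sup>2 \<and>
          (norm (A *v x))\<^sup>2 \<le> (1 + (B\<^sup>2 + 1)) * (norm x)\<^sup>2" for x :: "real^'n"
    proof
      have "- (B\<^sup>2 * (norm x)\<^sup>2) \<le> 0" by simp
      also have "0 \<le> (norm (A *v x))\<^sup>2" by simp
      finally show "(1 - (B\<^sup>2 + 1)) * (norm x)\<^sup>2 \<le> (norm (A *v x))\<^sup>2" by simp
      have "(norm (A *v x))\<^sup>2 \<le> (norm x * B)\<^sup>2" using B[of x] by (simp add: power_mono)
      also have "\<dots> = B\<^sup>2 * (norm x)\<^sup>2" by (simp add: power_mult_distrib)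
      also have "\<dots> \<le> (1 + (B\<^sup>2 + 1)) * (norm x)\<^sup>2" by (rule mult_right_mono) auto
      finally show "(norm (A *v x))\<^sup>2 \<le> (1 + (B\<^sup>2 + 1)) * (norm x)\<^sup>2" .
    qed
    then show ?thesis unfolding D_def by simp
  qed
  then have Dne: "D \<noteq> {}" by blast
  show ?thesis unfolding RIP_def R
  proof (intro allI impI)
    fix v :: "real^'n" assume "card (supp v) \<le> k"
    then have sv: "sparse k v" by (simp add: sparse_def)
    define n where "n = (norm v)\<^sup>2"
    define q where "q = (norm (A *v v))\<^sup>2"
    show "(1 - Inf D) * (norm v)\<^sup>2 \<le> (norm (A *v v))\<^sup>2 \<and> (norm (A *v v))\<^sup>2 \<le> (1 + Inf D) * (norm v)\<^sup>2"
    proof (cases "v = 0")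
      case True then show ?thesis by simp
    next
      case False
      then have npos: "n > 0" by (simp add: n_def)
      have "1 - q / n \<le> Inf D"
      proof (rule cInf_greatest[OF Dne])
        fix d assume "d \<in> D"
        then have "(1 - d) * n \<le> q" using sv unfolding D_def n_def q_def by simp
        then have "1 - d \<le> q / n" using npos by (simp add: pos_le_divide_eq)
        then show "1 - q / n \<le> d" by linarith
      qed
      moreover have "q / n - 1 \<le> Inf D"
      proof (rule cInf_greatest[OF Dne])
        fix d assume "d \<in> D"
        then have "q \<le> (1 + d) * n" using sv unfolding D_def n_def q_def by simp
        then have "q / n \<le> 1 + d" using npos by (simp add: pos_divide_le_eq)
        then show "q / n - 1 \<le> d" by linarith
      qed
      ultimately have "1 - Inf D \<le> q / n" "q / n \<le> 1 + Inf D" by linarith+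
      then have "(1 - Inf D) * n \<le> q \<and> q \<le> (1 + Inf D) * n"
        using npos by (simp add: pos_le_divide_eq pos_divide_le_eq)
      then show ?thesis by (simp add: n_def q_def)
    qed
  qed
qed

lemma ls_exists:
  fixes A :: "real^'n^'m"
  shows "\<exists>z. ls_min A y T z"
proof -
  define W where "W = {w :: real^'n. \<forall>i. i \<notin> T \<longrightarrow> w $ i = 0}"
  have sW: "subspace W" unfolding W_def subspace_def by auto
  have "subspace ((*v) A ` W)" by (rule linear_subspace_image[OF matrix_vector_mul_linear sW])
  then have cl: "closed ((*v) A ` W)" by (rule closed_subspace)
  have ne: "(*v) A ` W \<noteq> {}" using sW subspace_0 by blast
  obtain p where p: "p \<in> (*v) A ` W" and pm: "\<And>q. q \<in> (*v) A ` W \<Longrightarrow> dist y p \<le> dist y q"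
    using distance_attains_inf[OF cl ne] by metis
  obtain z where z: "z \<in> W" "p = A *v z" using p by blast
  have WS: "w \<in> W \<longleftrightarrow> supp w \<subseteq> T" for w unfolding W_def supp_def by auto
  have "ls_min A y T z"
    unfolding ls_min_def
  proof (intro conjI allI impI)
    show "supp z \<subseteq> T" using z WS by blast
    fix w assume "supp w \<subseteq> T"
    then have "A *v w \<in> (*v) A ` W" using WS by blast
    then show "norm (y - A *v z) \<le> norm (y - A *v w)" using pm z by (simp add: dist_norm)
  qed
  then show ?thesis ..
qed

lemma normal_eq:
  fixes A :: "real^'n^'m"
  assumes "ls_min A y T z" and "j \<in> T"
  shows "(y - A *v z) \<bullet> column j A = 0"
proof -
  define r where "r = y - A *v z"
  define q where "q = r \<bullet> column j A"
  define C where "C = (norm (column j A))\<^sup>2"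
  have C0: "C \<ge> 0" by (simp add: C_def)
  have key: "0 \<le> -2*t*q + t\<^sup>2*C" for t
  proof -
    have sz: "supp z \<subseteq> T" using assms(1) unfolding ls_min_def by blast
    have "supp (z + t *\<^sub>R axis j 1) \<subseteq> supp z \<union> supp (t *\<^sub>R axis j 1)" by (rule supp_add)
    also have "\<dots> \<subseteq> T" using supp_scale[of t "axis j 1"] supp_axis[of j] sz assms(2) by auto
    finally have "supp (z + t *\<^sub>R axis j 1) \<subseteq> T" .
    then have "norm r \<le> norm (y - A *v (z + t *\<^sub>R axis j 1))"
      using assms(1) unfolding ls_min_def r_def by blast
    also have "y - A *v (z + t *\<^sub>R axis j 1) = r + (-t) *\<^sub>R column j A"
      unfolding Av_expand r_def by simp
    finally have "(norm r)\<^sup>2 \<le> (norm (r + (-t) *\<^sub>R column j A))\<^sup>2"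
      by (simp add: power_mono)
    then show ?thesis unfolding norm_sq_expand q_def C_def by simp
  qed
  define s where "s = 1 / (C + 1)"
  have spos: "s > 0" using C0 by (simp add: s_def)
  have sC: "s * C < 1" using C0 by (simp add: s_def field_simps)
  have "0 \<le> -2*(s*q)*q + (s*q)\<^sup>2*C" by (rule key)
  also have "\<dots> = s * (q*q) * (s*C - 2)" by (simp add: algebra_simps power2_eq_square)
  finally have "0 \<le> s * ((q*q) * (s*C - 2))" by (simp add: mult.assoc)
  then have "0 \<le> (q*q) * (s*C - 2)" using spos by (simp add: zero_le_mult_iff)
  then have "q * q \<le> 0" using sC by (simp add: zero_le_mult_iff)
  then have "q = 0" by (metis mult_eq_0_iff mult_le_0_iff order_antisym_conv)
  then show ?thesis unfolding q_def r_def .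
qed

lemma zero_corr:
  fixes A :: "real^'n^'m"
  assumes "\<forall>j. (A *v u) \<bullet> column j A = 0"
  shows "A *v u = 0"
  using normsq_sum[of A u] assms by simp

theorem theorem2:
  fixes A :: "real^'n^'m" and K :: nat and x :: "real^'n" and t :: "nat \<Rightarrow> 'n"
  assumes "K \<ge> 1"
    and "K + 1 \<le> CARD('n)"
    and "RIC A (K + 1) = 1 / (sqrt (real K) + 1)"
    and "sparse K x"
    and "omp_run A (A *v x) K t"
  shows "(\<forall>k \<in> {1..K}. omp_residual A (A *v x) (t ` {1..<k}) \<noteq> 0 \<longrightarrow> t k \<in> supp x)
       \<and> (\<forall>z. ls_min A (A *v x) (t ` {1..K}) z \<longrightarrow> z = x)"
proof -
  define y where "y = A *v x"
  define S where "S = supp x"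
  define \<delta> where "\<delta> = RIC A (K+1)"
  have rip: "RIP A (K+1) \<delta>" unfolding \<delta>_def by (rule RIP_RIC)
  have sK: "sqrt (real K) \<ge> 1" using assms(1) by simp
  have dd: "\<delta> = 1 / (sqrt (real K) + 1)" using assms(3) by (simp add: \<delta>_def)
  have "sqrt (real K) + 1 \<noteq> 0" using sK by linarith
  then have dK: "\<delta> * (sqrt (real K) + 1) = 1" by (simp add: dd)
  have sp: "sqrt (real K) + 1 > 1" using sK by linarith
  have sp0: "sqrt (real K) + 1 > 0" using sp by linarith
  have dpos: "\<delta> > 0" unfolding dd using sp0 by (rule divide_pos_pos[OF zero_less_one])
  have dlt1: "\<delta> < 1" unfolding dd using sp sp0 by (simp only: divide_less_eq) simp
  have cS: "card S \<le> K" using assms(4) by (simp add: sparse_def S_def)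
  define zz where "zz T = (SOME z. ls_min A y T z)" for T
  have zz: "ls_min A y T (zz T)" for T
    unfolding zz_def using ls_exists[of A y T] by (rule someI_ex)
  have szz: "supp (zz T) \<subseteq> T" for T using zz[of T] unfolding ls_min_def by blast
  have resd: "omp_residual A y T = y - A *v zz T" for T unfolding omp_residual_def zz_def ..
  have res: "omp_residual A y T = A *v (x - zz T)" for T
    using resd[of T] unfolding y_def by (simp add: matrix_vector_mult_diff_distrib)
  have rip_inj: "w = 0" if "supp w \<subseteq> U" "card U \<le> K" "A *v w = 0" for w U
  proof -
    have "card (supp w) \<le> card U" using that(1) by (simp add: card_mono)
    then have "card (supp w) \<le> K + 1" using that(2) by simp
    then have "(1 - \<delta>) * (norm w)\<^sup>2 \<le> (norm (A *v w))\<^sup>2" using rip unfolding RIP_def by blast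
    then have "(1 - \<delta>) * (norm w)\<^sup>2 \<le> 0" using that(3) by simp
    then have "(norm w)\<^sup>2 \<le> 0" using dlt1 by (simp add: mult_le_0_iff)
    then show ?thesis by simp
  qed
  have mono: "omp_residual A y T' = 0" if "T \<subseteq> T'" "omp_residual A y T = 0" for T T'
  proof -
    have "supp (zz T) \<subseteq> T'" using szz[of T] that(1) by blast
    then have "norm (y - A *v zz T') \<le> norm (y - A *v zz T)"
      using zz[of T'] unfolding ls_min_def by blast
    then show ?thesis using that(2) unfolding resd by simp
  qed
  have zero: "S \<subseteq> T" if "T \<subseteq> S" "omp_residual A y T = 0" for T
  proof -
    have "supp (x - zz T) \<subseteq> S" using supp_diff[of x "zz T"] szz[of T] that(1) S_def by blast
    moreover have "A *v (x - zz T) = 0" using that(2) res by simp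
    ultimately have "x - zz T = 0" using rip_inj cS by blast
    then show ?thesis using szz[of T] S_def by simp
  qed
  define R where "R k = omp_residual A y (t ` {1..<k})" for k
  have run: "\<bar>R k \<bullet> column j A\<bar> \<le> \<bar>R k \<bullet> column (t k) A\<bar>" if "k \<in> {1..K}" for k j
    using assms(5) that unfolding omp_run_def R_def y_def by blast
  have step: "k \<in> {1..K} \<longrightarrow> R k \<noteq> 0 \<longrightarrow> t k \<in> S \<and> t k \<notin> t ` {1..<k}" for k
  proof (induction k rule: less_induct)
    case (less k)
    show ?case
    proof (intro impI)
      assume kK: "k \<in> {1..K}" and Rk: "R k \<noteq> 0"
      define T where "T = t ` {1..<k}"
      have TS: "T \<subseteq> S"
      proof
        fix i assume "i \<in> T"
        then obtain k' where k': "k' \<in> {1..<k}" "i = t k'" unfolding T_def by blast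
        have "t ` {1..<k'} \<subseteq> t ` {1..<k}" using k' by auto
        then have "R k' \<noteq> 0" using mono Rk unfolding R_def by blast
        moreover have "k' \<in> {1..K}" using k' kK by auto
        ultimately show "i \<in> S" using less.IH[of k'] k' by auto
      qed
      define u where "u = x - zz T"
      have su: "supp u \<subseteq> S" using supp_diff[of x "zz T"] szz[of T] TS S_def u_def by blast
      have Ru: "R k = A *v u" unfolding R_def u_def T_def by (rule res)
      have "t k \<in> S"
      proof (rule ccontr)
        assume "t k \<notin> S"
        have "A *v u = 0"
          by (rule core[OF rip dK dpos su cS \<open>t k \<notin> S\<close>]) (use run[OF kK] Ru in auto)
        then show False using Rk Ru by simp
      qed
      moreover have "t k \<notin> T"
      proof
        assume "t k \<in> T"
        have "(y - A *v zz T) \<bullet> column (t k) A = 0" by (rule normal_eq[OF zz \<open>t k \<in> T\<close>])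
        then have "R k \<bullet> column (t k) A = 0" unfolding R_def resd T_def .
        then have "\<forall>j. (A *v u) \<bullet> column j A = 0" using run[OF kK] Ru by (metis abs_le_zero_iff abs_zero)
        then have "A *v u = 0" by (rule zero_corr)
        then show False using Rk Ru by simp
      qed
      ultimately show "t k \<in> S \<and> t k \<notin> t ` {1..<k}" unfolding T_def by blast
    qed
  qed
  have part1: "\<forall>k \<in> {1..K}. omp_residual A (A *v x) (t ` {1..<k}) \<noteq> 0 \<longrightarrow> t k \<in> supp x"
    using step unfolding R_def y_def S_def by blast
  define TT where "TT = t ` {1..K}"
  have cTT: "card TT \<le> K" unfolding TT_def using card_image_le[of "{1..K}" t] by simp
  have ST: "S \<subseteq> TT"
  proof (cases "\<exists>k. k \<in> {1..K} \<and> R k = 0")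
    case True
    then obtain k where k: "k \<in> {1..K} \<and> R k = 0" and kl: "\<And>k'. k' < k \<Longrightarrow> \<not> (k' \<in> {1..K} \<and> R k' = 0)"
      using exists_least_iff[of "\<lambda>k. k \<in> {1..K} \<and> R k = 0"] by blast
    have TS: "t ` {1..<k} \<subseteq> S"
    proof
      fix i assume "i \<in> t ` {1..<k}"
      then obtain k' where k': "k' \<in> {1..<k}" "i = t k'" by blast
      have "k' \<in> {1..K}" using k' k by auto
      then have "R k' \<noteq> 0" using kl[of k'] k' by auto
      then show "i \<in> S" using step[of k'] \<open>k' \<in> {1..K}\<close> k' by auto
    qed
    have "S \<subseteq> t ` {1..<k}" using zero[OF TS] k unfolding R_def by blast
    also have "\<dots> \<subseteq> TT" unfolding TT_def using k by auto
    finally show ?thesis .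
  next
    case False
    then have allS: "\<And>k. k \<in> {1..K} \<Longrightarrow> t k \<in> S \<and> t k \<notin> t ` {1..<k}" using step by blast
    have sub: "TT \<subseteq> S" unfolding TT_def using allS by blast
    have inj: "inj_on t {1..K}"
    proof (rule inj_onI)
      fix a b assume a: "a \<in> {1..K}" and b: "b \<in> {1..K}" and eq: "t a = t b"
      show "a = b"
      proof (rule ccontr)
        assume "a \<noteq> b"
        then consider "a < b" | "b < a" by linarith
        then show False
        proof cases
          case 1 then have "t a \<in> t ` {1..<b}" using a by auto
          then show False using allS[OF b] eq by simp
        next
          case 2 then have "t b \<in> t ` {1..<a}" using b by auto
          then show False using allS[OF a] eq by simp
        qed
      qed
    qed
    have "card TT = K" unfolding TT_def using card_image[OF inj] by simp
    then have "card S \<le> card TT" using cS by simp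
    then have "TT = S" using card_seteq[OF finite sub] by blast
    then show ?thesis by simp
  qed
  have part2: "\<forall>z. ls_min A (A *v x) (t ` {1..K}) z \<longrightarrow> z = x"
  proof (intro allI impI)
    fix z assume lz: "ls_min A (A *v x) (t ` {1..K}) z"
    have "supp x \<subseteq> t ` {1..K}" using ST unfolding S_def TT_def .
    then have "norm (A *v x - A *v z) \<le> norm (A *v x - A *v x)" using lz unfolding ls_min_def by blast
    then have "A *v (x - z) = 0" by (simp add: matrix_vector_mult_diff_distrib)
    moreover have "supp (x - z) \<subseteq> TT"
      using supp_diff[of x z] lz ST unfolding ls_min_def S_def TT_def by blast
    ultimately have "x - z = 0" using rip_inj cTT by blast
    then show "z = x" by simp
  qed
  show ?thesis using part1 part2 by blast
qed

end
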